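(* Let $Y$ be a weakly uniformly convex geodesic space satisfying: for every $a\in Y$ and every $\varepsilon>0$ there exists $s>0$ such that $\inf_{r\ge s}\delta_Y(a,r,\varepsilon)>0$. Then $Y$ has property (C) with $\Psi(y,r,\varepsilon)=\delta_Y(y,r,\varepsilon)$ for all $y\in Y$, $r>0$, $\varepsilon\in(0,2]$; that is: (C1) for all $y\in Y$, $r>0$, $\varepsilon\in(0,2]$ and all $x,z\in Y$ with $d(x,y)=r$ and $d(y,z)\ge r$, if $w$ lies on a geodesic segment from $y$ to $z$ with $d(y,w)=r$, then $r+d(x,z)\le d(y,z)+\delta_Y(y,r,\varepsilon)r$ implies $d(w,x)\le\varepsilon r$; (C2) for all $y\in Y$ and $\varepsilon\in(0,2]$ there exists $s>0$ such that $\inf_{r\ge s}\delta_Y(y,r,\varepsilon)>0$.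
   Context: A geodesic space is a metric space in which any two points are joined by a geodesic path (a distance-preserving map from an interval $[0,l]$); its image is a geodesic segment. The modulus of convexity of $Y$ is \[\delta_Y(a,r,\varepsilon)=\inf\{1-d(a,m(x,y))/r : d(a,x)\le r,\ d(a,y)\le r,\ d(x,y)\ge\varepsilon r\}\] for $a\in Y$, $r>0$, $\varepsilon\in(0,2]$, where $m(x,y)$ ranges over midpoints of geodesic segments from $x$ to $y$; $Y$ is weakly uniformly convex if $\delta_Y(a,r,\varepsilon)>0$ for all such $a,r,\varepsilon$. *)

theory Defs
  imports "HOL-Analysis.Analysis" "HOL-Library.Extended_Real"
begin

text \<open>The geodesic space Y is the whole carrier of a metric space type.\<close>

definition geodesic_path :: "(real \<Rightarrow> 'a::metric_space) \<Rightarrow> real \<Rightarrow> 'a \<Rightarrow> 'a \<Rightarrow> bool" where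
  "geodesic_path g l x y \<longleftrightarrow> 0 \<le> l \<and> g 0 = x \<and> g l = y \<and>
     (\<forall>s\<in>{0..l}. \<forall>t\<in>{0..l}. dist (g s) (g t) = \<bar>s - t\<bar>)"

definition geodesic_space :: "'a::metric_space itself \<Rightarrow> bool" where
  "geodesic_space _ \<longleftrightarrow> (\<forall>x y::'a. \<exists>g l. geodesic_path g l x y)"

definition on_geodesic_segment :: "'a::metric_space \<Rightarrow> 'a \<Rightarrow> 'a \<Rightarrow> bool" where
  "on_geodesic_segment x y w \<longleftrightarrow> (\<exists>g l. geodesic_path g l x y \<and> w \<in> g ` {0..l})"

definition geodesic_midpoint :: "'a::metric_space \<Rightarrow> 'a \<Rightarrow> 'a \<Rightarrow> bool" where
  "geodesic_midpoint x y m \<longleftrightarrow> (\<exists>g l. geodesic_path g l x y \<and> m = g (l / 2))"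

text \<open>Modulus of convexity; the infimum is taken in the extended reals, so that the
  infimum of the empty set is \<open>\<infinity>\<close>.\<close>
definition modulus_convexity :: "'a::metric_space \<Rightarrow> real \<Rightarrow> real \<Rightarrow> ereal" where
  "modulus_convexity a r \<epsilon> = Inf {ereal (1 - dist a m / r) | x y m.
      dist a x \<le> r \<and> dist a y \<le> r \<and> dist x y \<ge> \<epsilon> * r \<and> geodesic_midpoint x y m}"

definition weakly_uniformly_convex :: "'a::metric_space itself \<Rightarrow> bool" where
  "weakly_uniformly_convex _ \<longleftrightarrow>
     (\<forall>(a::'a) r \<epsilon>. r > 0 \<longrightarrow> 0 < \<epsilon> \<longrightarrow> \<epsilon> \<le> 2 \<longrightarrow> modulus_convexity a r \<epsilon> > 0)"

end

theory Submission
  imports Defs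
begin

lemma mod_le:
  assumes "dist a x \<le> r" "dist a y \<le> r" "dist x y \<ge> \<epsilon> * r" "geodesic_midpoint x y m"
  shows "modulus_convexity a r \<epsilon> \<le> ereal (1 - dist a m / r)"
  unfolding modulus_convexity_def
  by (rule Inf_lower) (use assms in blast)

lemma C1:
  assumes geo: "geodesic_space TYPE('a::metric_space)"
    and wuc: "weakly_uniformly_convex TYPE('a)"
    and r: "r > 0" and e: "0 < \<epsilon>" "\<epsilon> \<le> 2"
    and xy: "dist x y = r" and yz: "dist y z \<ge> r"
    and seg: "on_geodesic_segment y z w" and yw: "dist y w = r"
    and H: "ereal (r + dist x z) \<le> ereal (dist y z) + modulus_convexity y r \<epsilon> * ereal r"
  shows "dist w (x::'a) \<le> \<epsilon> * r"
proof (rule ccontr)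
  assume nc: "\<not> dist w x \<le> \<epsilon> * r"
  obtain g l where g: "geodesic_path g l x w"
    using geo unfolding geodesic_space_def by blast
  define m where "m = g (l/2)"
  have mid: "geodesic_midpoint x w m" unfolding geodesic_midpoint_def m_def using g by blast
  have le1: "modulus_convexity y r \<epsilon> \<le> ereal (1 - dist y m / r)"
    by (rule mod_le) (use xy yw nc mid in \<open>auto simp: dist_commute\<close>)
  have pos: "modulus_convexity y r \<epsilon> > 0" using wuc r e unfolding weakly_uniformly_convex_def by blast
  obtain d0 where d0: "modulus_convexity y r \<epsilon> = ereal d0"
    using le1 pos by (cases "modulus_convexity y r \<epsilon>") auto
  have d0p: "d0 > 0" "d0 \<le> 1 - dist y m / r" using le1 pos d0 by auto
  have "d0 * r \<le> r - dist y m" using d0p(2) r by (simp add: field_simps)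
  have H': "r + dist x z \<le> dist y z + d0 * r" using H d0 by simp
  have ym: "dist y m < r" using d0p r \<open>d0 * r \<le> r - dist y m\<close> by (smt (verit) mult_pos_pos)
  obtain h L where h: "geodesic_path h L y z" and wh: "w \<in> h ` {0..L}"
    using seg unfolding on_geodesic_segment_def by blast
  obtain t where t: "t \<in> {0..L}" "w = h t" using wh by blast
  have hp: "0 \<le> L" "h 0 = y" "h L = z" "\<And>s u. s \<in> {0..L} \<Longrightarrow> u \<in> {0..L} \<Longrightarrow> dist (h s) (h u) = \<bar>s - u\<bar>"
    using h unfolding geodesic_path_def by auto
  have L: "L = dist y z" using hp(4)[of 0 L] hp by auto
  have "dist y w = t" using hp(4)[of 0 t] hp(1,2) t by auto
  moreover have "dist w z = L - t" using hp(4)[of t L] hp(1,3) t by auto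
  ultimately have wz: "dist w z = dist y z - r" using yw L by simp
  have tri: "dist y z \<le> dist y m + dist m z" by (rule dist_triangle)
  define R where "R = dist z m"
  have xz: "dist z x \<le> R" using \<open>d0 * r \<le> r - dist y m\<close> H' tri unfolding R_def
    by (simp add: dist_commute)
  have wz': "dist z w \<le> R" using wz ym tri unfolding R_def by (simp add: dist_commute)
  have Rp: "R > 0" using ym tri yz unfolding R_def
    using dist_commute[of z m] dist_commute[of y m] by linarith
  define e' where "e' = dist x w / R"
  have er: "\<epsilon> * r > 0" using e r by simp
  have dxw: "dist x w > 0" using nc er dist_commute[of x w] by linarith
  have e'p: "0 < e'" using dxw Rp unfolding e'_def by simp
  have "dist x w \<le> dist x z + dist z w" by (rule dist_triangle)
  hence "dist x w \<le> 2 * R" using xz wz' dist_commute[of x z] by linarith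
  hence e'2: "e' \<le> 2" using Rp unfolding e'_def by (simp add: divide_le_eq)
  have e'R: "e' * R = dist x w" using Rp unfolding e'_def by simp
  have "modulus_convexity z R e' \<le> ereal (1 - dist z m / R)"
    by (rule mod_le[OF xz wz' _ mid]) (simp add: e'R)
  also have "\<dots> = 0" using Rp unfolding R_def by simp
  finally have "modulus_convexity z R e' \<le> 0" .
  moreover have "modulus_convexity z R e' > 0"
    using wuc Rp e'p e'2 unfolding weakly_uniformly_convex_def by blast
  ultimately show False by simp
qed

theorem lemma2p1:
  assumes geo: "geodesic_space TYPE('a::metric_space)"
    and wuc: "weakly_uniformly_convex TYPE('a)"
    and hyp: "\<And>(a::'a) \<epsilon>. \<epsilon> > 0 \<Longrightarrow>
               \<exists>s>0. (INF r\<in>{s..}. modulus_convexity a r \<epsilon>) > 0"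
  shows "(\<forall>(y::'a) r \<epsilon> x z w. r > 0 \<longrightarrow> 0 < \<epsilon> \<longrightarrow> \<epsilon> \<le> 2 \<longrightarrow>
            dist x y = r \<longrightarrow> dist y z \<ge> r \<longrightarrow>
            on_geodesic_segment y z w \<longrightarrow> dist y w = r \<longrightarrow>
            ereal (r + dist x z) \<le> ereal (dist y z) + modulus_convexity y r \<epsilon> * ereal r \<longrightarrow>
            dist w x \<le> \<epsilon> * r)
       \<and> (\<forall>(y::'a) \<epsilon>. 0 < \<epsilon> \<longrightarrow> \<epsilon> \<le> 2 \<longrightarrow>
            (\<exists>s>0. (INF r\<in>{s..}. modulus_convexity y r \<epsilon>) > 0))"
  using C1[OF geo wuc] hyp by blast

end
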